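(* Let $\tilde L$ be a minimum-size counterexample. If $M$ is a nonempty set of meet-irreducible elements of $\tilde L$, then there exists a join-irreducible element $j$ of $\tilde L$ such that $|{\uparrow}j\cap M|>\frac{|M|}{2}$.
   Context: For a poset $P$, $x$ upper covers $y$ (and $y$ lower covers $x$) if $y<x$ with nothing strictly between. Join-irreducible: upper covers exactly one element; meet-irreducible: lower covers exactly one element. For $x\in P$, ${\uparrow}x=\{y\in P: x\le y\}$. A counterexample is a finite lattice $L$ with $|L|>1$ in which every join-irreducible $j$ satisfies $|{\uparrow}j|>|L|/2$; a minimum-size counterexample is a counterexample $\tilde L$ such that no counterexample has fewer elements. *)

theory Defs
  imports Complex_Main "HOL-Algebra.Lattice"
begin

definition upper_covers :: "('a, 'b) gorder_scheme \<Rightarrow> 'a \<Rightarrow> 'a \<Rightarrow> bool" where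
  "upper_covers L x y \<longleftrightarrow> x \<in> carrier L \<and> y \<in> carrier L \<and> y \<sqsubset>\<^bsub>L\<^esub> x \<and>
     \<not> (\<exists>z \<in> carrier L. y \<sqsubset>\<^bsub>L\<^esub> z \<and> z \<sqsubset>\<^bsub>L\<^esub> x)"

definition join_irreducible :: "('a, 'b) gorder_scheme \<Rightarrow> 'a \<Rightarrow> bool" where
  "join_irreducible L j \<longleftrightarrow> j \<in> carrier L \<and> (\<exists>!y. upper_covers L j y)"

definition meet_irreducible :: "('a, 'b) gorder_scheme \<Rightarrow> 'a \<Rightarrow> bool" where
  "meet_irreducible L m \<longleftrightarrow> m \<in> carrier L \<and> (\<exists>!y. upper_covers L y m)"

definition up_set :: "('a, 'b) gorder_scheme \<Rightarrow> 'a \<Rightarrow> 'a set" where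
  "up_set L x = {y \<in> carrier L. x \<sqsubseteq>\<^bsub>L\<^esub> y}"

definition counterexample :: "('a, 'b) gorder_scheme \<Rightarrow> bool" where
  "counterexample L \<longleftrightarrow> lattice L \<and> finite (carrier L) \<and> card (carrier L) > 1 \<and>
     (\<forall>j. join_irreducible L j \<longrightarrow> real (card (up_set L j)) > real (card (carrier L)) / 2)"

text \<open>Competing lattices are
  taken with carriers in the same element type; since that type contains the
  carrier of L, every finite lattice with fewer elements has an isomorphic copy there.\<close>
definition min_counterexample :: "'a gorder \<Rightarrow> bool" where
  "min_counterexample L \<longleftrightarrow> counterexample L \<and>
     (\<forall>K :: 'a gorder. counterexample K \<longrightarrow> card (carrier L) \<le> card (carrier K))"

end

theory Submission
  imports Defs
begin


context partial_order
begin

lemma min_ex: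
  assumes fin: "finite (carrier L)" and A: "A \<subseteq> carrier L" "a0 \<in> A"
  shows "\<exists>a\<in>A. \<forall>b\<in>A. \<not> b \<sqsubset> a"
proof -
  define f where "f a = card {y\<in>carrier L. y \<sqsubseteq> a}" for a
  obtain a where a: "a \<in> A" "\<forall>b. b \<in> A \<longrightarrow> f a \<le> f b"
    using ex_has_least_nat[of "\<lambda>a. a\<in>A" a0 f] A by blast
  show ?thesis
  proof (intro bexI[OF _ a(1)] ballI notI)
    fix b assume b: "b \<in> A" "b \<sqsubset> a"
    have ac: "a \<in> carrier L" "b \<in> carrier L" using a(1) b(1) A by auto
    have "{y\<in>carrier L. y \<sqsubseteq> b} \<subseteq> {y\<in>carrier L. y \<sqsubseteq> a}"
      using b ac by (auto simp: lless_eq intro: le_trans)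
    moreover have "a \<notin> {y\<in>carrier L. y \<sqsubseteq> b}" using b ac by (auto simp: lless_eq dest: le_antisym)
    ultimately have "{y\<in>carrier L. y \<sqsubseteq> b} \<subset> {y\<in>carrier L. y \<sqsubseteq> a}" using ac by auto
    moreover have "finite {y\<in>carrier L. y \<sqsubseteq> a}" using fin by simp
    ultimately have "f b < f a" unfolding f_def by (simp add: psubset_card_mono)
    with a b show False by force
  qed
qed

lemma max_ex:
  assumes fin: "finite (carrier L)" and A: "A \<subseteq> carrier L" "a0 \<in> A"
  shows "\<exists>a\<in>A. \<forall>b\<in>A. \<not> a \<sqsubset> b"
proof -
  define f where "f a = card {y\<in>carrier L. a \<sqsubseteq> y}" for a
  obtain a where a: "a \<in> A" "\<forall>b. b \<in> A \<longrightarrow> f a \<le> f b"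
    using ex_has_least_nat[of "\<lambda>a. a\<in>A" a0 f] A by blast
  show ?thesis
  proof (intro bexI[OF _ a(1)] ballI notI)
    fix b assume b: "b \<in> A" "a \<sqsubset> b"
    have ac: "a \<in> carrier L" "b \<in> carrier L" using a(1) b(1) A by auto
    have "{y\<in>carrier L. b \<sqsubseteq> y} \<subseteq> {y\<in>carrier L. a \<sqsubseteq> y}"
      using b ac by (auto simp: lless_eq intro: le_trans)
    moreover have "a \<notin> {y\<in>carrier L. b \<sqsubseteq> y}" using b ac by (auto simp: lless_eq dest: le_antisym)
    ultimately have "{y\<in>carrier L. b \<sqsubseteq> y} \<subset> {y\<in>carrier L. a \<sqsubseteq> y}" using ac by auto
    moreover have "finite {y\<in>carrier L. a \<sqsubseteq> y}" using fin by simp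
    ultimately have "f b < f a" unfolding f_def by (simp add: psubset_card_mono)
    with a b show False by force
  qed
qed

lemma cover_above:
  assumes fin: "finite (carrier L)" and xy: "x \<in> carrier L" "y \<in> carrier L" "y \<sqsubset> x"
  shows "\<exists>z. upper_covers L z y \<and> z \<sqsubseteq> x"
proof -
  obtain z where z: "z \<in> {z\<in>carrier L. y \<sqsubset> z \<and> z \<sqsubseteq> x}"
    and zm: "\<forall>b\<in>{z\<in>carrier L. y \<sqsubset> z \<and> z \<sqsubseteq> x}. \<not> b \<sqsubset> z"
    using min_ex[OF fin, of "{z\<in>carrier L. y \<sqsubset> z \<and> z \<sqsubseteq> x}" x] xy by auto
  have "upper_covers L z y" unfolding upper_covers_def
  proof (intro conjI notI)
    show "z \<in> carrier L" "y \<in> carrier L" "y \<sqsubset> z" using z xy by auto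
  next
    assume "\<exists>w\<in>carrier L. y \<sqsubset> w \<and> w \<sqsubset> z"
    then obtain w where w: "w \<in> carrier L" "y \<sqsubset> w" "w \<sqsubset> z" by blast
    have "w \<sqsubseteq> x" using w z xy by (auto simp: lless_eq intro: le_trans)
    then show False using zm w by auto
  qed
  then show ?thesis using z by auto
qed

lemma cover_below:
  assumes fin: "finite (carrier L)" and xy: "x \<in> carrier L" "y \<in> carrier L" "y \<sqsubset> x"
  shows "\<exists>z. upper_covers L x z \<and> y \<sqsubseteq> z"
proof -
  obtain z where z: "z \<in> {z\<in>carrier L. y \<sqsubseteq> z \<and> z \<sqsubset> x}"
    and zm: "\<forall>b\<in>{z\<in>carrier L. y \<sqsubseteq> z \<and> z \<sqsubset> x}. \<not> z \<sqsubset> b"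
    using max_ex[OF fin, of "{z\<in>carrier L. y \<sqsubseteq> z \<and> z \<sqsubset> x}" y] xy by auto
  have "upper_covers L x z" unfolding upper_covers_def
  proof (intro conjI notI)
    show "z \<in> carrier L" "x \<in> carrier L" "z \<sqsubset> x" using z xy by auto
  next
    assume "\<exists>w\<in>carrier L. z \<sqsubset> w \<and> w \<sqsubset> x"
    then obtain w where w: "w \<in> carrier L" "z \<sqsubset> w" "w \<sqsubset> x" by blast
    have "y \<sqsubseteq> w" using w z xy by (auto simp: lless_eq intro: le_trans)
    then show False using zm w by auto
  qed
  then show ?thesis using z by auto
qed

lemma mi_cover_le:
  assumes fin: "finite (carrier L)" and m: "meet_irreducible L m" and c: "upper_covers L c m"
    and x: "x \<in> carrier L" "m \<sqsubset> x"
  shows "c \<sqsubseteq> x"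
proof -
  obtain z where z: "upper_covers L z m" "z \<sqsubseteq> x"
    using cover_above[OF fin x(1) _ x(2)] m unfolding meet_irreducible_def by blast
  have "z = c" using m z(1) c unfolding meet_irreducible_def by blast
  then show ?thesis using z by simp
qed

end


context lattice
begin

lemma meet_notin_M:
  assumes fin: "finite (carrier L)" and M: "\<forall>m\<in>M. meet_irreducible L m"
    and x: "x \<in> carrier L" "x \<notin> M" and y: "y \<in> carrier L" "y \<notin> M"
  shows "x \<sqinter> y \<notin> M"
proof
  assume m: "x \<sqinter> y \<in> M"
  let ?m = "x \<sqinter> y"
  have mi: "meet_irreducible L ?m" using M m by blast
  then obtain c where c: "upper_covers L c ?m" unfolding meet_irreducible_def by blast
  have mc: "?m \<in> carrier L" using x y by simp
  have "?m \<sqsubseteq> x" by (rule meet_left[OF x(1) y(1)])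
  moreover have "?m \<noteq> x" using m x(2) by metis
  ultimately have "?m \<sqsubset> x" unfolding lless_eq by blast
  then have cx: "c \<sqsubseteq> x" using mi_cover_le[OF fin mi c x(1)] by blast
  have "?m \<sqsubseteq> y" by (rule meet_right[OF x(1) y(1)])
  moreover have "?m \<noteq> y" using m y(2) by metis
  ultimately have "?m \<sqsubset> y" unfolding lless_eq by blast
  then have cy: "c \<sqsubseteq> y" using mi_cover_le[OF fin mi c y(1)] by blast
  have cc: "c \<in> carrier L" using c unfolding upper_covers_def by blast
  have 1: "c \<sqsubseteq> ?m" using meet_le[OF cx cy x(1) y(1) cc] .
  have "?m \<sqsubset> c" using c unfolding upper_covers_def by blast
  then have 2: "?m \<sqsubseteq> c" and 3: "?m \<noteq> c" unfolding lless_eq by blast+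
  have "c = ?m" by (rule le_antisym[OF 1 2 cc mc])
  then show False using 3 by metis
qed

lemma least_meet_closed:
  assumes fin: "finite (carrier L)" and A: "A \<subseteq> carrier L" "a0 \<in> A"
    and cl: "\<And>x y. x \<in> A \<Longrightarrow> y \<in> A \<Longrightarrow> x \<sqinter> y \<in> A"
  shows "\<exists>a\<in>A. \<forall>b\<in>A. a \<sqsubseteq> b"
proof -
  obtain a where a: "a \<in> A" "\<forall>b\<in>A. \<not> b \<sqsubset> a" using min_ex[OF fin A] by blast
  show ?thesis
  proof (intro bexI[OF _ a(1)] ballI)
    fix b assume b: "b \<in> A"
    have ac: "a \<in> carrier L" "b \<in> carrier L" using A a(1) b by auto
    have ab: "a \<sqinter> b \<in> A" using cl a(1) b .
    have le: "a \<sqinter> b \<sqsubseteq> a" using meet_left[OF ac] .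
    have "\<not> (a \<sqinter> b) \<sqsubset> a" using a(2) ab by blast
    then have e: "a \<sqinter> b = a" using le unfolding lless_eq by blast
    show "a \<sqsubseteq> b" using meet_right[OF ac] unfolding e .
  qed
qed

end



lemma sub_lattice:
  assumes LL: "lattice L" and fin: "finite (carrier L)" and SS: "S \<subseteq> carrier L"
   and cl: "\<And>x y. x\<in>S \<Longrightarrow> y\<in>S \<Longrightarrow> x \<sqinter>\<^bsub>L\<^esub> y \<in> S"
   and ub: "\<And>x y. x\<in>S \<Longrightarrow> y\<in>S \<Longrightarrow> \<exists>t\<in>S. x \<sqsubseteq>\<^bsub>L\<^esub> t \<and> y \<sqsubseteq>\<^bsub>L\<^esub> t"
  shows "lattice (L\<lparr>carrier := S\<rparr>)"
proof -
  interpret L: lattice L by (rule LL)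
  interpret K: weak_partial_order "L\<lparr>carrier := S\<rparr>"
    by (rule weak_partial_order_subset[OF L.weak_partial_order_axioms SS])
  show ?thesis
  proof unfold_locales
    show "(.=\<^bsub>L\<lparr>carrier := S\<rparr>\<^esub>) = (=)" using L.eq_is_equal by simp
  next
    fix x y assume xy: "x \<in> carrier (L\<lparr>carrier := S\<rparr>)" "y \<in> carrier (L\<lparr>carrier := S\<rparr>)"
    then have xS: "x \<in> S" and yS: "y \<in> S" by simp_all
    have xc: "x \<in> carrier L" and yc: "y \<in> carrier L" using xS yS SS by blast+
    define U where "U = {t\<in>S. x \<sqsubseteq>\<^bsub>L\<^esub> t \<and> y \<sqsubseteq>\<^bsub>L\<^esub> t}"
    obtain t0 where t0: "t0 \<in> U" using ub[OF xS yS] unfolding U_def by blast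
    have US: "U \<subseteq> carrier L" using SS unfolding U_def by blast
    have Ucl: "a \<sqinter>\<^bsub>L\<^esub> b \<in> U" if a: "a \<in> U" and b: "b \<in> U" for a b
    proof -
      have ac: "a \<in> carrier L" "b \<in> carrier L" using a b US by blast+
      have "a \<in> S" "b \<in> S" "x \<sqsubseteq>\<^bsub>L\<^esub> a" "y \<sqsubseteq>\<^bsub>L\<^esub> a" "x \<sqsubseteq>\<^bsub>L\<^esub> b" "y \<sqsubseteq>\<^bsub>L\<^esub> b"
        using a b unfolding U_def by blast+
      moreover have "x \<sqsubseteq>\<^bsub>L\<^esub> a \<sqinter>\<^bsub>L\<^esub> b" using L.meet_le[OF calculation(3,5) ac xc] .
      moreover have "y \<sqsubseteq>\<^bsub>L\<^esub> a \<sqinter>\<^bsub>L\<^esub> b" using L.meet_le[OF calculation(4,6) ac yc] .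
      moreover have "a \<sqinter>\<^bsub>L\<^esub> b \<in> S" using cl calculation(1,2) .
      ultimately show ?thesis unfolding U_def by blast
    qed
    obtain u where u: "u \<in> U" "\<forall>b\<in>U. u \<sqsubseteq>\<^bsub>L\<^esub> b"
      using L.least_meet_closed[OF fin US t0 Ucl] by blast
    have UU: "Upper (L\<lparr>carrier := S\<rparr>) {x, y} = U"
      using xS yS unfolding U_def Upper_def by auto
    have "least (L\<lparr>carrier := S\<rparr>) u (Upper (L\<lparr>carrier := S\<rparr>) {x, y})"
      unfolding UU least_def using u US unfolding U_def by auto
    then show "\<exists>s. least (L\<lparr>carrier := S\<rparr>) s (Upper (L\<lparr>carrier := S\<rparr>) {x, y})" by blast
  next
    fix x y assume xy: "x \<in> carrier (L\<lparr>carrier := S\<rparr>)" "y \<in> carrier (L\<lparr>carrier := S\<rparr>)"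
    then have xS: "x \<in> S" and yS: "y \<in> S" by simp_all
    have xc: "x \<in> carrier L" and yc: "y \<in> carrier L" using xS yS SS by blast+
    have mS: "x \<sqinter>\<^bsub>L\<^esub> y \<in> S" using cl xS yS .
    have LL: "Lower (L\<lparr>carrier := S\<rparr>) {x, y} = {l\<in>S. l \<sqsubseteq>\<^bsub>L\<^esub> x \<and> l \<sqsubseteq>\<^bsub>L\<^esub> y}"
      using xS yS unfolding Lower_def by auto
    have "greatest (L\<lparr>carrier := S\<rparr>) (x \<sqinter>\<^bsub>L\<^esub> y) (Lower (L\<lparr>carrier := S\<rparr>) {x, y})"
      unfolding LL greatest_def
    proof (intro conjI ballI)
      show "{l \<in> S. l \<sqsubseteq>\<^bsub>L\<^esub> x \<and> l \<sqsubseteq>\<^bsub>L\<^esub> y} \<subseteq> carrier (L\<lparr>carrier := S\<rparr>)" by auto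
      show "x \<sqinter>\<^bsub>L\<^esub> y \<in> {l \<in> S. l \<sqsubseteq>\<^bsub>L\<^esub> x \<and> l \<sqsubseteq>\<^bsub>L\<^esub> y}"
        using mS L.meet_left[OF xc yc] L.meet_right[OF xc yc] by blast
      fix l assume l: "l \<in> {l \<in> S. l \<sqsubseteq>\<^bsub>L\<^esub> x \<and> l \<sqsubseteq>\<^bsub>L\<^esub> y}"
      then have "l \<in> carrier L" "l \<sqsubseteq>\<^bsub>L\<^esub> x" "l \<sqsubseteq>\<^bsub>L\<^esub> y" using SS by blast+
      then show "l \<sqsubseteq>\<^bsub>L\<lparr>carrier := S\<rparr>\<^esub> x \<sqinter>\<^bsub>L\<^esub> y"
        using L.meet_le[of l x y] xc yc by simp
    qed
    then show "\<exists>s. greatest (L\<lparr>carrier := S\<rparr>) s (Lower (L\<lparr>carrier := S\<rparr>) {x, y})" by blast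
  qed
qed


lemma lless_upd: "(x \<sqsubset>\<^bsub>L\<lparr>carrier := S\<rparr>\<^esub> y) = (x \<sqsubset>\<^bsub>L\<^esub> y)"
  by (simp add: lless_def)

lemma upper_covers_upd:
  "upper_covers (L\<lparr>carrier := S\<rparr>) a b \<longleftrightarrow>
   a \<in> S \<and> b \<in> S \<and> b \<sqsubset>\<^bsub>L\<^esub> a \<and> \<not> (\<exists>z\<in>S. b \<sqsubset>\<^bsub>L\<^esub> z \<and> z \<sqsubset>\<^bsub>L\<^esub> a)"
  by (simp add: upper_covers_def lless_def)

theorem theorem2p9:
  fixes L :: "'a gorder" and M :: "'a set"
  assumes "min_counterexample L"
    and "M \<noteq> {}"
    and "\<forall>m \<in> M. meet_irreducible L m"
  shows "\<exists>j. join_irreducible L j \<and> real (card (up_set L j \<inter> M)) > real (card M) / 2"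
proof (rule ccontr)
  assume neg: "\<not> ?thesis"
  have H: "real (card (up_set L j \<inter> M)) \<le> real (card M) / 2" if "join_irreducible L j" for j
  proof -
    have "\<not> real (card (up_set L j \<inter> M)) > real (card M) / 2" using neg that by blast
    then show ?thesis by linarith
  qed
  have CE: "counterexample L" and minK: "\<And>K :: 'a gorder. counterexample K \<Longrightarrow> card (carrier L) \<le> card (carrier K)"
    using assms(1) unfolding min_counterexample_def by blast+
  have LL: "lattice L" and fin: "finite (carrier L)" and c1: "card (carrier L) > 1"
    and CJ: "\<And>j. join_irreducible L j \<Longrightarrow> real (card (up_set L j)) > real (card (carrier L)) / 2"
    using CE unfolding counterexample_def by blast+
  interpret L: lattice L by (rule LL)
  have MC: "M \<subseteq> carrier L" using assms(3) unfolding meet_irreducible_def by blast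
  define S where "S = carrier L - M"
  have SC: "S \<subseteq> carrier L" unfolding S_def by blast
  have finS: "finite S" using fin SC finite_subset by blast
  have ne: "carrier L \<noteq> {}"
  proof
    assume "carrier L = {}" then show False using c1 by simp
  qed
  then obtain e where e: "e \<in> carrier L" by blast
  obtain t where tc: "t \<in> carrier L" and tmax: "\<forall>b\<in>carrier L. \<not> t \<sqsubset>\<^bsub>L\<^esub> b"
    using L.max_ex[OF fin subset_refl e] by blast
  have top: "x \<sqsubseteq>\<^bsub>L\<^esub> t" if xc: "x \<in> carrier L" for x
  proof -
    have jc: "t \<squnion>\<^bsub>L\<^esub> x \<in> carrier L" using L.join_closed[OF tc xc] .
    have "t \<sqsubseteq>\<^bsub>L\<^esub> t \<squnion>\<^bsub>L\<^esub> x" using L.join_left[OF tc xc] .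
    moreover have "\<not> t \<sqsubset>\<^bsub>L\<^esub> t \<squnion>\<^bsub>L\<^esub> x" using tmax jc by metis
    ultimately have "t \<squnion>\<^bsub>L\<^esub> x = t" unfolding L.lless_eq by metis
    then show ?thesis using L.join_right[OF tc xc] by simp
  qed
  have tS: "t \<in> S"
  proof -
    have "t \<notin> M"
    proof
      assume "t \<in> M"
      then obtain y where "upper_covers L y t" using assms(3) unfolding meet_irreducible_def by blast
      then have "y \<in> carrier L" "t \<sqsubset>\<^bsub>L\<^esub> y" unfolding upper_covers_def by simp_all
      then show False using tmax by metis
    qed
    then show ?thesis using tc unfolding S_def by blast
  qed
  have Scl: "x \<sqinter>\<^bsub>L\<^esub> y \<in> S" if "x \<in> S" "y \<in> S" for x y
  proof -
    have "x \<in> carrier L" "x \<notin> M" "y \<in> carrier L" "y \<notin> M" using that unfolding S_def by blast+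
    then have "x \<sqinter>\<^bsub>L\<^esub> y \<notin> M" "x \<sqinter>\<^bsub>L\<^esub> y \<in> carrier L"
      using L.meet_notin_M[OF fin assms(3)] L.meet_closed by blast+
    then show ?thesis unfolding S_def by blast
  qed
  define K where "K = L\<lparr>carrier := S\<rparr>"
  have latK: "lattice K" unfolding K_def
  proof (rule sub_lattice[OF LL fin SC Scl])
    fix x y assume "x \<in> S" "y \<in> S"
    then have "x \<in> carrier L" "y \<in> carrier L" using SC by (simp_all add: subsetD)
    then have "x \<sqsubseteq>\<^bsub>L\<^esub> t" "y \<sqsubseteq>\<^bsub>L\<^esub> t" using top by simp_all
    then show "\<exists>t\<in>S. x \<sqsubseteq>\<^bsub>L\<^esub> t \<and> y \<sqsubseteq>\<^bsub>L\<^esub> t" using tS by (intro bexI[of _ t]) simp_all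
  qed
  have cardSM: "card S + card M = card (carrier L)"
  proof -
    have fM: "finite M" using fin MC finite_subset by blast
    have "card S = card (carrier L) - card M" unfolding S_def using card_Diff_subset[OF fM MC] .
    moreover have "card M \<le> card (carrier L)" using card_mono[OF fin MC] .
    ultimately show ?thesis by linarith
  qed
  have cardM0: "card M > 0" using assms(2) MC fin finite_subset card_gt_0_iff by blast
  have "\<not> counterexample K"
  proof
    assume "counterexample K"
    then have "card (carrier L) \<le> card (carrier K)" by (rule minK)
    then have "card (carrier L) \<le> card S" unfolding K_def by simp
    then show False using cardSM cardM0 by linarith
  qed
  then have nc: "\<not> (lattice K \<and> finite (carrier K) \<and> card (carrier K) > 1 \<and>
     (\<forall>j. join_irreducible K j \<longrightarrow> real (card (up_set K j)) > real (card (carrier K)) / 2))"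
    unfolding counterexample_def .
  have cK: "carrier K = S" unfolding K_def by simp
  have alt: "card S \<le> 1 \<or> (\<exists>j'. join_irreducible K j' \<and> \<not> real (card (up_set K j')) > real (card S) / 2)"
    using nc latK finS unfolding cK by (metis not_less)
  have upK: "up_set K j = {y\<in>S. j \<sqsubseteq>\<^bsub>L\<^esub> y}" for j
    unfolding up_set_def K_def by simp
  have ucK: "upper_covers K a b \<longleftrightarrow>
   a \<in> S \<and> b \<in> S \<and> b \<sqsubset>\<^bsub>L\<^esub> a \<and> \<not> (\<exists>z\<in>S. b \<sqsubset>\<^bsub>L\<^esub> z \<and> z \<sqsubset>\<^bsub>L\<^esub> a)" for a b
    unfolding K_def by (rule upper_covers_upd)
  have finK: "finite (carrier K)" using finS cK by simp
  interpret K: lattice K by (rule latK)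
  show False
    using alt
  proof
    assume "\<exists>j'. join_irreducible K j' \<and> \<not> real (card (up_set K j')) > real (card S) / 2"
    then obtain j' where jK: "join_irreducible K j'" and small: "real (card (up_set K j')) \<le> real (card S) / 2"
      by (metis not_less)
    obtain k where kc: "upper_covers K j' k" and kuniq: "\<And>y. upper_covers K j' y \<Longrightarrow> y = k"
      using jK unfolding join_irreducible_def by metis
    have j'S: "j' \<in> S" and kS: "k \<in> S" and kj: "k \<sqsubset>\<^bsub>L\<^esub> j'" using kc unfolding ucK by simp_all
    have j'c: "j' \<in> carrier L" and kcar: "k \<in> carrier L" using j'S kS SC by (simp_all add: subsetD)
    have kj1: "k \<sqsubseteq>\<^bsub>L\<^esub> j'" and kj2: "k \<noteq> j'" using kj unfolding L.lless_eq by simp_all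
    define P where "P x \<longleftrightarrow> x \<in> carrier L \<and> (\<forall>s\<in>S. x \<sqsubseteq>\<^bsub>L\<^esub> s \<longleftrightarrow> j' \<sqsubseteq>\<^bsub>L\<^esub> s)" for x
    have Pj: "j' \<in> {x. P x}" unfolding P_def using j'c by simp
    have PC: "{x. P x} \<subseteq> carrier L" unfolding P_def by blast
    obtain x where xA: "x \<in> {x. P x}" and xmin: "\<forall>b\<in>{x. P x}. \<not> b \<sqsubset>\<^bsub>L\<^esub> x"
      using L.min_ex[OF fin PC Pj] by metis
    have xc: "x \<in> carrier L" and xP: "\<And>s. s \<in> S \<Longrightarrow> x \<sqsubseteq>\<^bsub>L\<^esub> s \<longleftrightarrow> j' \<sqsubseteq>\<^bsub>L\<^esub> s"
      using xA unfolding P_def by simp_all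
    have xj: "x \<sqsubseteq>\<^bsub>L\<^esub> j'" using xP[OF j'S] j'c by simp
    have nxk: "\<not> x \<sqsubseteq>\<^bsub>L\<^esub> k"
    proof
      assume "x \<sqsubseteq>\<^bsub>L\<^esub> k"
      then have "j' \<sqsubseteq>\<^bsub>L\<^esub> k" using xP[OF kS] by simp
      then have "k = j'" using L.le_antisym[OF kj1 _ kcar j'c] by simp
      then show False using kj2 by simp
    qed
    have below_k: "a \<sqsubseteq>\<^bsub>L\<^esub> k" if ac: "upper_covers L x a" for a
    proof -
      have acar: "a \<in> carrier L" and ax: "a \<sqsubset>\<^bsub>L\<^esub> x" using ac unfolding upper_covers_def by simp_all
      have ax1: "a \<sqsubseteq>\<^bsub>L\<^esub> x" using ax unfolding L.lless_eq by simp
      have aj: "a \<sqsubseteq>\<^bsub>L\<^esub> j'" using L.le_trans[OF ax1 xj acar xc j'c] .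
      have "\<not> P a" using xmin ax by (metis mem_Collect_eq)
      then obtain s where sS: "s \<in> S" and sd: "\<not> (a \<sqsubseteq>\<^bsub>L\<^esub> s \<longleftrightarrow> j' \<sqsubseteq>\<^bsub>L\<^esub> s)"
        unfolding P_def using acar by metis
      have sc: "s \<in> carrier L" using sS SC by (simp add: subsetD)
      have nj: "\<not> j' \<sqsubseteq>\<^bsub>L\<^esub> s"
      proof
        assume js: "j' \<sqsubseteq>\<^bsub>L\<^esub> s"
        then have "x \<sqsubseteq>\<^bsub>L\<^esub> s" using xP[OF sS] by simp
        then have "a \<sqsubseteq>\<^bsub>L\<^esub> s" using L.le_trans[OF ax1 _ acar xc sc] by simp
        then show False using sd js by simp
      qed
      then have as: "a \<sqsubseteq>\<^bsub>L\<^esub> s" using sd by simp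
      define t' where "t' = s \<sqinter>\<^bsub>L\<^esub> j'"
      have t'S: "t' \<in> S" unfolding t'_def using Scl[OF sS j'S] .
      have t'c: "t' \<in> carrier L" unfolding t'_def using L.meet_closed[OF sc j'c] .
      have at: "a \<sqsubseteq>\<^bsub>L\<^esub> t'" unfolding t'_def using L.meet_le[OF as aj sc j'c acar] .
      have tj: "t' \<sqsubseteq>\<^bsub>L\<^esub> j'" unfolding t'_def using L.meet_right[OF sc j'c] .
      have ts: "t' \<sqsubseteq>\<^bsub>L\<^esub> s" unfolding t'_def using L.meet_left[OF sc j'c] .
      have "t' \<noteq> j'" using ts nj by metis
      then have "t' \<sqsubset>\<^bsub>K\<^esub> j'" using tj unfolding K_def lless_upd L.lless_eq by simp
      moreover have "j' \<in> carrier K" "t' \<in> carrier K" using j'S t'S cK by simp_all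
      ultimately obtain z where zc: "upper_covers K j' z" and tz: "t' \<sqsubseteq>\<^bsub>K\<^esub> z"
        using K.cover_below[OF finK] by metis
      have "z = k" using kuniq[OF zc] .
      then have tk: "t' \<sqsubseteq>\<^bsub>L\<^esub> k" using tz unfolding K_def by simp
      show ?thesis using L.le_trans[OF at tk acar t'c kcar] .
    qed
    have cov_le: "a \<sqsubseteq>\<^bsub>L\<^esub> x" "a \<in> carrier L" "a \<sqsubset>\<^bsub>L\<^esub> x" if "upper_covers L x a" for a
      using that unfolding upper_covers_def L.lless_eq by simp_all
    have jix: "join_irreducible L x"
      unfolding join_irreducible_def
    proof (intro conjI xc ex_ex1I)
      define y0 where "y0 = x \<sqinter>\<^bsub>L\<^esub> k"
      have y0c: "y0 \<in> carrier L" unfolding y0_def using L.meet_closed[OF xc kcar] .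
      have y0x: "y0 \<sqsubseteq>\<^bsub>L\<^esub> x" unfolding y0_def using L.meet_left[OF xc kcar] .
      have y0k: "y0 \<sqsubseteq>\<^bsub>L\<^esub> k" unfolding y0_def using L.meet_right[OF xc kcar] .
      have "y0 \<noteq> x" using y0k nxk by metis
      then have "y0 \<sqsubset>\<^bsub>L\<^esub> x" using y0x unfolding L.lless_eq by simp
      then obtain z where "upper_covers L x z" using L.cover_below[OF fin xc y0c] by metis
      then show "\<exists>z. upper_covers L x z" by metis
    next
      fix a b assume ac: "upper_covers L x a" and bc: "upper_covers L x b"
      show "a = b"
      proof (rule ccontr)
        assume ab: "a \<noteq> b"
        have ak: "a \<sqsubseteq>\<^bsub>L\<^esub> k" using below_k[OF ac] .
        have bk: "b \<sqsubseteq>\<^bsub>L\<^esub> k" using below_k[OF bc] .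
        note a = cov_le[OF ac] and b = cov_le[OF bc]
        define J where "J = a \<squnion>\<^bsub>L\<^esub> b"
        have Jc: "J \<in> carrier L" unfolding J_def using L.join_closed[OF a(2) b(2)] .
        have aJ: "a \<sqsubseteq>\<^bsub>L\<^esub> J" unfolding J_def using L.join_left[OF a(2) b(2)] .
        have bJ: "b \<sqsubseteq>\<^bsub>L\<^esub> J" unfolding J_def using L.join_right[OF a(2) b(2)] .
        have Jx: "J \<sqsubseteq>\<^bsub>L\<^esub> x" unfolding J_def using L.join_le[OF a(1) b(1) a(2) b(2) xc] .
        have Jk: "J \<sqsubseteq>\<^bsub>L\<^esub> k" unfolding J_def using L.join_le[OF ak bk a(2) b(2) kcar] .
        have "J = x"
        proof (rule ccontr)
          assume Jne: "J \<noteq> x"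
          then have Jlx: "J \<sqsubset>\<^bsub>L\<^esub> x" using Jx unfolding L.lless_eq by simp
          show False
          proof (cases "a = J")
            case True
            then have "b \<sqsubseteq>\<^bsub>L\<^esub> a" using bJ by simp
            then have "b \<sqsubset>\<^bsub>L\<^esub> a" using ab unfolding L.lless_eq by metis
            then show False using bc a(2) a(3) unfolding upper_covers_def by metis
          next
            case False
            then have "a \<sqsubset>\<^bsub>L\<^esub> J" using aJ unfolding L.lless_eq by simp
            then show False using ac Jc Jlx unfolding upper_covers_def by metis
          qed
        qed
        then show False using Jk nxk by simp
      qed
    qed
    have "up_set L x \<inter> S = {y\<in>S. j' \<sqsubseteq>\<^bsub>L\<^esub> y}"
      unfolding up_set_def using xP SC by auto
    then have upeq: "up_set L x \<inter> S = up_set K j'" unfolding upK .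
    have upM: "real (card (up_set L x \<inter> M)) \<le> real (card M) / 2" using H[OF jix] .
    have fu: "finite (up_set L x)" unfolding up_set_def using fin by simp
    have "up_set L x = (up_set L x \<inter> M) \<union> (up_set L x \<inter> S)"
      unfolding S_def up_set_def by blast
    moreover have "(up_set L x \<inter> M) \<inter> (up_set L x \<inter> S) = {}" unfolding S_def by blast
    ultimately have "card (up_set L x) = card (up_set L x \<inter> M) + card (up_set L x \<inter> S)"
      using fu by (metis card_Un_disjoint finite_Int)
    then have "real (card (up_set L x)) = real (card (up_set L x \<inter> M)) + real (card (up_set K j'))"
      unfolding upeq by simp
    also have "\<dots> \<le> real (card M) / 2 + real (card S) / 2" using upM small by linarith
    also have "\<dots> = real (card (carrier L)) / 2" using cardSM
      by (metis add_divide_distrib of_nat_add add.commute)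
    finally show False using CJ[OF jix] by linarith
  next
    assume cS1: "card S \<le> 1"
    have S1: "S = {t}"
    proof -
      have "S \<noteq> {}" using tS by blast
      then have "card S = 1" using cS1 finS card_0_eq by fastforce
      then obtain u where "S = {u}" using card_1_singletonE by metis
      then show ?thesis using tS by simp
    qed
    have S1': "carrier L - M = {t}" using S1 unfolding S_def .
    have Mdef: "M = carrier L - {t}" unfolding S1'[symmetric] by (rule sym[OF double_diff[OF MC subset_refl]])
    have Lcl: "x \<sqinter>\<^bsub>L\<^esub> y \<in> carrier L" if "x \<in> carrier L" "y \<in> carrier L" for x y
      using L.meet_closed[OF that] .
    from L.least_meet_closed[OF fin subset_refl e Lcl]
    obtain b where bc: "b \<in> carrier L" and bot: "\<forall>y\<in>carrier L. b \<sqsubseteq>\<^bsub>L\<^esub> y"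
      by (rule bexE)
    have "\<not> carrier L \<subseteq> {t}"
    proof
      assume "carrier L \<subseteq> {t}"
      then have "card (carrier L) \<le> card {t}" by (rule card_mono[rotated]) simp
      then show False using c1 by simp
    qed
    then obtain x0 where x0: "x0 \<in> carrier L" "x0 \<notin> {t}" by (meson subsetI)
    then have x0: "x0 \<in> carrier L" "x0 \<noteq> t" by simp_all
    have bt: "b \<noteq> t"
    proof
      assume "b = t"
      then have "x0 \<sqsubseteq>\<^bsub>L\<^esub> b" "b \<sqsubseteq>\<^bsub>L\<^esub> x0" using top[OF x0(1)] bot x0(1) by simp_all
      then have "x0 = b" using L.le_antisym[of x0 b] x0(1) bc by simp
      then show False using \<open>b = t\<close> x0(2) by simp
    qed
    have bM: "b \<in> M" unfolding Mdef using bc bt by (intro DiffI) simp_all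
    then have bmi: "meet_irreducible L b" by (rule bspec[OF assms(3)])
    then have "\<exists>!y. upper_covers L y b" unfolding meet_irreducible_def by (rule conjunct2)
    then have "\<exists>y. upper_covers L y b" by (rule ex1_implies_ex)
    then obtain a where ab: "upper_covers L a b" by (rule exE)
    have abd: "a \<in> carrier L \<and> b \<in> carrier L \<and> b \<sqsubset>\<^bsub>L\<^esub> a \<and> \<not> (\<exists>z\<in>carrier L. b \<sqsubset>\<^bsub>L\<^esub> z \<and> z \<sqsubset>\<^bsub>L\<^esub> a)"
      using ab unfolding upper_covers_def .
    have acar: "a \<in> carrier L" using abd by (rule conjunct1)
    have ba: "b \<sqsubset>\<^bsub>L\<^esub> a" using abd by (elim conjE)
    have abnz: "\<not> (\<exists>z\<in>carrier L. b \<sqsubset>\<^bsub>L\<^esub> z \<and> z \<sqsubset>\<^bsub>L\<^esub> a)" using abd by (elim conjE)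
    have above: "a \<sqsubseteq>\<^bsub>L\<^esub> y" if "y \<in> carrier L" "y \<noteq> b" for y
    proof -
      have "b \<sqsubseteq>\<^bsub>L\<^esub> y" using bot that(1) by simp
      then have "b \<sqsubset>\<^bsub>L\<^esub> y" using that(2) unfolding L.lless_eq by simp
      then show ?thesis using L.mi_cover_le[OF fin bmi ab that(1)] by simp
    qed
    have jia: "join_irreducible L a"
      unfolding join_irreducible_def
    proof (intro conjI acar ex1I[of _ b])
      show "upper_covers L a b" using ab .
      fix y assume yc: "upper_covers L a y"
      then have ycar: "y \<in> carrier L" and ya: "y \<sqsubset>\<^bsub>L\<^esub> a" unfolding upper_covers_def by simp_all
      show "y = b"
      proof (rule ccontr)
        assume "y \<noteq> b"
        moreover have "b \<sqsubseteq>\<^bsub>L\<^esub> y" using bot ycar by simp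
        ultimately have "b \<sqsubset>\<^bsub>L\<^esub> y" unfolding L.lless_eq by simp
        then show False using abnz ycar ya by metis
      qed
    qed
    have upa: "up_set L a = carrier L - {b}"
    proof
      show "up_set L a \<subseteq> carrier L - {b}"
      proof
        fix y assume "y \<in> up_set L a"
        then have y: "y \<in> carrier L" "a \<sqsubseteq>\<^bsub>L\<^esub> y" unfolding up_set_def by simp_all
        have "y \<noteq> b"
        proof
          assume "y = b"
          then have "a \<sqsubseteq>\<^bsub>L\<^esub> b" using y by simp
          moreover have "b \<sqsubseteq>\<^bsub>L\<^esub> a" "b \<noteq> a" using ba unfolding L.lless_eq by simp_all
          ultimately show False using L.le_antisym[of a b] acar bc by simp
        qed
        then show "y \<in> carrier L - {b}" using y by simp
      qed
      show "carrier L - {b} \<subseteq> up_set L a"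
      proof
        fix y assume "y \<in> carrier L - {b}"
        then have "y \<in> carrier L" "y \<noteq> b" by simp_all
        then show "y \<in> up_set L a" unfolding up_set_def using above by simp
      qed
    qed
    define n where "n = card (carrier L)"
    have cupa: "card (up_set L a) = n - 1" unfolding upa n_def using bc fin by simp
    have "up_set L a \<inter> M = carrier L - {b} - {t}" unfolding upa Mdef by blast
    then have cupaM: "card (up_set L a \<inter> M) = n - 2" unfolding n_def using bc tc bt fin
      by (simp add: card_Diff_singleton)
    have cM: "card M = n - 1" unfolding Mdef n_def using tc fin by simp
    have i1: "real (n - 1) > real n / 2" using CJ[OF jia] cupa n_def by simp
    have i2: "real (n - 2) \<le> real (n - 1) / 2" using H[OF jia] cupaM cM by simp
    have n1: "n > 1" using c1 n_def by simp
    have n3: "n = 3" using i1 i2 n1 by linarith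
    have at: "a \<noteq> t"
    proof
      assume "a = t"
      have "card (carrier L - {b, t}) = n - 2" unfolding n_def using bc tc bt fin
        by (simp add: card_Diff_subset)
      then have "card (carrier L - {b, t}) = 1" using n3 by simp
      then have "carrier L - {b, t} \<noteq> {}" by (metis card.empty zero_neq_one)
      then obtain w where w: "w \<in> carrier L" "w \<noteq> b" "w \<noteq> t" by blast
      have "a \<sqsubseteq>\<^bsub>L\<^esub> w" using above w by simp
      moreover have "w \<sqsubseteq>\<^bsub>L\<^esub> a" using top w \<open>a = t\<close> by simp
      ultimately have "w = a" using L.le_antisym[of w a] w acar by simp
      then show False using w \<open>a = t\<close> by simp
    qed
    have Leq: "carrier L = {a, b, t}"
    proof -
      have sub: "{a, b, t} \<subseteq> carrier L" using acar bc tc by simp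
      have "a \<noteq> b" using ba unfolding L.lless_eq by metis
      then have "card {a, b, t} = 3" using at bt by simp
      then show ?thesis using card_subset_eq[OF fin sub] n3 n_def by simp
    qed
    have bnlt: "\<not> a \<sqsubset>\<^bsub>L\<^esub> b"
    proof
      assume "a \<sqsubset>\<^bsub>L\<^esub> b"
      then have "a \<sqsubseteq>\<^bsub>L\<^esub> b" unfolding L.lless_eq by simp
      moreover have "b \<sqsubseteq>\<^bsub>L\<^esub> a" "b \<noteq> a" using ba unfolding L.lless_eq by simp_all
      ultimately show False using L.le_antisym[of a b] acar bc by simp
    qed
    have at2: "a \<sqsubset>\<^bsub>L\<^esub> t" using top[OF acar] at unfolding L.lless_eq by simp
    have nt: "\<not> y \<sqsubset>\<^bsub>L\<^esub> y" for y unfolding L.lless_eq by simp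
    have jit: "join_irreducible L t"
      unfolding join_irreducible_def
    proof (intro conjI tc ex1I[of _ a])
      show "upper_covers L t a" unfolding upper_covers_def
      proof (intro conjI tc acar at2 notI)
        assume "\<exists>z\<in>carrier L. a \<sqsubset>\<^bsub>L\<^esub> z \<and> z \<sqsubset>\<^bsub>L\<^esub> t"
        then obtain z where z: "z \<in> {a, b, t}" "a \<sqsubset>\<^bsub>L\<^esub> z" "z \<sqsubset>\<^bsub>L\<^esub> t" unfolding Leq by blast
        from z(1) have "z = a \<or> z = b \<or> z = t" by simp
        then show False using z(2,3) nt bnlt by metis
      qed
      fix y assume yc: "upper_covers L t y"
      then have ycar: "y \<in> {a, b, t}" and yt: "y \<sqsubset>\<^bsub>L\<^esub> t"
        and yn: "\<not> (\<exists>z\<in>carrier L. y \<sqsubset>\<^bsub>L\<^esub> z \<and> z \<sqsubset>\<^bsub>L\<^esub> t)"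
        unfolding upper_covers_def Leq[symmetric] by simp_all
      have "y \<noteq> t" using yt nt by metis
      moreover have "y \<noteq> b" using yn ba at2 acar by metis
      ultimately show "y = a" using ycar by simp
    qed
    have "up_set L t = {t}"
    proof
      show "up_set L t \<subseteq> {t}"
      proof
        fix y assume "y \<in> up_set L t"
        then have y: "y \<in> carrier L" "t \<sqsubseteq>\<^bsub>L\<^esub> y" unfolding up_set_def by simp_all
        then have "y = t" using top[OF y(1)] L.le_antisym[of y t] tc by simp
        then show "y \<in> {t}" by simp
      qed
      show "{t} \<subseteq> up_set L t" unfolding up_set_def using tc by simp
    qed
    then show False using CJ[OF jit] n3 n_def by simp
  qed
qed

end
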